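(* Let $\alpha,\beta$ be $H$-colorings of $G$, $q\in V(G)$, and let $Q\in\pi(H)$ be realizable for $\alpha,\beta,q$. Let $C$ be an $\alpha$-tight closed walk in $G$. Then for every vertex $v$ on $C$ and every walk $W$ in $G$ from $v$ to $q$, $Q=\overline{\alpha(W)}^{-1}\cdot\overline{\beta(W)}$.
   Context: All graphs are finite and undirected. $G$ is a connected loopless graph with at least one edge. $H$ is a connected graph with at least one edge, possibly with loops, having the monochromatic neighborhood property: for all $a,b\in V(H)$, $|N_H(a)\cap N_H(b)|\le 1$, where $N_H(a)=\{w: aw\in E(H)\}$. An $H$-coloring of $G$ is a map $\sigma:V(G)\to V(H)$ such that $uv\in E(G)$ implies $\sigma(u)\sigma(v)\in E(H)$. An $H$-recoloring sequence is a sequence $\sigma_0,\dots,\sigma_l$ of $H$-colorings of $G$ in which consecutive colorings differ in the color of exactly one vertex. Walks: an oriented edge is an ordered pair $(x,y)$ with $xy$ an edge; $(x,y)^{-1}=(y,x)$. A walk from $x$ to $y$ is a sequence of oriented edges, consecutive ones sharing endpoints, starting at $x$ and ending at $y$; $\varepsilon$ is the empty walk; $W^{-1}$ the reversed walk. A walk is reduced if no two consecutive edges $e_ie_{i+1}$ satisfy $e_{i+1}=e_i^{-1}$; $\overline{W}$ is the unique reduced walk obtained by repeatedly deleting such pairs. $A\cdot B:=\overline{AB}$ for reduced $A,B$ with $B$ starting where $A$ ends. $\pi(H)$ is the set of reduced walks in $H$. For a walk $W=(x_0,x_1)\dots(x_{k-1},x_k)$ in $G$, $\alpha(W)=(\alpha(x_0),\alpha(x_1))\dots(\alpha(x_{k-1}),\alpha(x_k))$.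 A nonempty closed walk $e_1\dots e_k$ is cyclically reduced if it is reduced and $e_k\ne e_1^{-1}$; a closed walk $C$ in $G$ is $\alpha$-tight if $\alpha(C)$ is cyclically reduced. Vertex walks: in a one-step sequence $\sigma_0,\sigma_1$ where vertex $w$ changes from $a$ to $b\ne a$, all neighbors of $w$ have a common color $h$ (the unique element of $N_H(a)\cap N_H(b)$); set $S(w)=(a,h)(h,b)$ and $S(v)=\varepsilon$ for $v\ne w$. For the empty sequence $S(v)=\varepsilon$; for longer sequences $S(v)$ is the concatenation of the one-step walks in order. $Q\in\pi(H)$ is realizable for $\alpha,\beta,q$ if there is an $H$-recoloring sequence $S=\sigma_0,\dots,\sigma_l$ with $\sigma_0=\alpha$, $\sigma_l=\beta$, $\overline{S(q)}=Q$. *)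

theory Defs
  imports Main
begin

type_synonym 'v owalk = "('v \<times> 'v) list"

fun walk :: "('v \<Rightarrow> 'v \<Rightarrow> bool) \<Rightarrow> 'v \<Rightarrow> 'v \<Rightarrow> 'v owalk \<Rightarrow> bool" where
  "walk E x y [] = (x = y)"
| "walk E x y ((u, v) # W) = (x = u \<and> E u v \<and> walk E v y W)"

definition inv_edge :: "'v \<times> 'v \<Rightarrow> 'v \<times> 'v" where
  "inv_edge e = (snd e, fst e)"

definition inv_walk :: "'v owalk \<Rightarrow> 'v owalk" where
  "inv_walk W = rev (map inv_edge W)"

fun reduced :: "'v owalk \<Rightarrow> bool" where
  "reduced (e # f # W) = (f \<noteq> inv_edge e \<and> reduced (f # W))"
| "reduced _ = True"

fun reduce :: "'v owalk \<Rightarrow> 'v owalk" where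
  "reduce [] = []"
| "reduce (e # W) = (case reduce W of
       [] \<Rightarrow> [e]
     | f # R \<Rightarrow> (if f = inv_edge e then R else e # f # R))"

definition wmult :: "'v owalk \<Rightarrow> 'v owalk \<Rightarrow> 'v owalk" (infixl "\<cdot>\<^sub>w" 70) where
  "A \<cdot>\<^sub>w B = reduce (A @ B)"

definition pi_walks :: "('v \<Rightarrow> 'v \<Rightarrow> bool) \<Rightarrow> 'v owalk set" where
  "pi_walks E = {W. reduced W \<and> (\<exists>x y. walk E x y W)}"

definition map_walk :: "('a \<Rightarrow> 'b) \<Rightarrow> 'a owalk \<Rightarrow> 'b owalk" where
  "map_walk f W = map (\<lambda>(x, y). (f x, f y)) W"

definition cyclically_reduced :: "'v owalk \<Rightarrow> bool" where
  "cyclically_reduced W \<longleftrightarrow> W \<noteq> [] \<and> reduced W \<and> last W \<noteq> inv_edge (hd W)"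

definition closed_walk :: "('v \<Rightarrow> 'v \<Rightarrow> bool) \<Rightarrow> 'v owalk \<Rightarrow> bool" where
  "closed_walk E C \<longleftrightarrow> C \<noteq> [] \<and> (\<exists>x. walk E x x C)"

definition tight :: "('a \<Rightarrow> 'b) \<Rightarrow> 'a owalk \<Rightarrow> bool" where
  "tight \<alpha> C \<longleftrightarrow> cyclically_reduced (map_walk \<alpha> C)"

definition sym_rel :: "('v \<Rightarrow> 'v \<Rightarrow> bool) \<Rightarrow> bool" where
  "sym_rel E \<longleftrightarrow> (\<forall>x y. E x y \<longrightarrow> E y x)"

definition connected_graph :: "('v \<Rightarrow> 'v \<Rightarrow> bool) \<Rightarrow> bool" where
  "connected_graph E \<longleftrightarrow> (\<forall>x y. E\<^sup>*\<^sup>* x y)"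

definition has_edge :: "('v \<Rightarrow> 'v \<Rightarrow> bool) \<Rightarrow> bool" where
  "has_edge E \<longleftrightarrow> (\<exists>x y. E x y)"

definition mono_nbhd :: "('v \<Rightarrow> 'v \<Rightarrow> bool) \<Rightarrow> bool" where
  "mono_nbhd E \<longleftrightarrow> (\<forall>a b. a \<noteq> b \<longrightarrow> card {w. E a w \<and> E b w} \<le> 1)"

definition hom_col :: "('a \<Rightarrow> 'a \<Rightarrow> bool) \<Rightarrow> ('b \<Rightarrow> 'b \<Rightarrow> bool) \<Rightarrow> ('a \<Rightarrow> 'b) \<Rightarrow> bool" where
  "hom_col EG EH \<sigma> \<longleftrightarrow> (\<forall>u v. EG u v \<longrightarrow> EH (\<sigma> u) (\<sigma> v))"

definition recolor_seq :: "('a \<Rightarrow> 'a \<Rightarrow> bool) \<Rightarrow> ('b \<Rightarrow> 'b \<Rightarrow> bool) \<Rightarrow> ('a \<Rightarrow> 'b) list \<Rightarrow> bool" where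
  "recolor_seq EG EH ss \<longleftrightarrow> ss \<noteq> [] \<and> (\<forall>\<sigma>\<in>set ss. hom_col EG EH \<sigma>)
     \<and> (\<forall>i. Suc i < length ss \<longrightarrow> card {v. (ss ! i) v \<noteq> (ss ! Suc i) v} = 1)"

definition step_walk :: "('b \<Rightarrow> 'b \<Rightarrow> bool) \<Rightarrow> ('a \<Rightarrow> 'b) \<Rightarrow> ('a \<Rightarrow> 'b) \<Rightarrow> 'a \<Rightarrow> 'b owalk" where
  "step_walk EH \<sigma> \<tau> v =
     (if \<sigma> v = \<tau> v then []
      else (let h = (THE h. EH (\<sigma> v) h \<and> EH (\<tau> v) h) in [(\<sigma> v, h), (h, \<tau> v)]))"

fun vertex_walk :: "('b \<Rightarrow> 'b \<Rightarrow> bool) \<Rightarrow> ('a \<Rightarrow> 'b) list \<Rightarrow> 'a \<Rightarrow> 'b owalk" where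
  "vertex_walk EH (\<sigma> # \<tau> # ss) v = step_walk EH \<sigma> \<tau> v @ vertex_walk EH (\<tau> # ss) v"
| "vertex_walk EH _ v = []"

definition realizable :: "('a \<Rightarrow> 'a \<Rightarrow> bool) \<Rightarrow> ('b \<Rightarrow> 'b \<Rightarrow> bool) \<Rightarrow> ('a \<Rightarrow> 'b) \<Rightarrow> ('a \<Rightarrow> 'b) \<Rightarrow> 'a \<Rightarrow> 'b owalk \<Rightarrow> bool" where
  "realizable EG EH \<alpha> \<beta> q Q \<longleftrightarrow> Q \<in> pi_walks EH \<and>
     (\<exists>ss. recolor_seq EG EH ss \<and> hd ss = \<alpha> \<and> last ss = \<beta> \<and> reduce (vertex_walk EH ss q) = Q)"

end

theory Submission imports Defs begin

definition cr :: "'v \<times> 'v \<Rightarrow> 'v owalk \<Rightarrow> 'v owalk" where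
  "cr e R = (case R of [] \<Rightarrow> [e] | f # R' \<Rightarrow> (if f = inv_edge e then R' else e # f # R'))"

lemma reduce_cons: "reduce (e # W) = cr e (reduce W)"
  by (simp add: cr_def)

declare reduce.simps(2)[simp del]

lemma reduce_append: "reduce (A @ B) = foldr cr A (reduce B)"
  by (induction A) (auto simp: reduce_cons)

lemma inv_inv[simp]: "inv_edge (inv_edge e) = e"
  by (simp add: inv_edge_def)

lemma reduced_tl: "reduced (f # R) \<Longrightarrow> reduced R"
  by (cases R) auto

lemma reduced_cr: "reduced R \<Longrightarrow> reduced (cr e R)"
  by (cases R) (auto simp: cr_def dest: reduced_tl)

lemma reduced_reduce: "reduced (reduce W)"
  by (induction W) (auto simp: reduce_cons intro: reduced_cr)

lemma reduce_id: "reduced W \<Longrightarrow> reduce W = W"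
proof (induction W)
  case Nil then show ?case by simp
next
  case (Cons e W)
  then have "reduce W = W" using reduced_tl by blast
  then show ?case using Cons.prems by (cases W) (auto simp: cr_def reduce_cons)
qed

lemma cr_cancel: "reduced R \<Longrightarrow> cr e (cr (inv_edge e) R) = R"
proof (cases R)
  case Nil then show ?thesis by (simp add: cr_def)
next
  case (Cons f R')
  assume r: "reduced R"
  show ?thesis
  proof (cases "f = e")
    case True
    then show ?thesis using Cons r by (cases R') (auto simp: cr_def)
  next
    case False
    then show ?thesis using Cons by (auto simp: cr_def)
  qed
qed

lemma reduce_cancel: "reduce (A @ e # inv_edge e # B) = reduce (A @ B)"
proof -
  have "reduce (e # inv_edge e # B) = reduce B"
    by (simp add: reduce_cons[of e] reduce_cons[of "inv_edge e"] cr_cancel reduced_reduce)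
  then show ?thesis by (metis reduce_append)
qed

lemma reduce_right: "reduce (A @ B) = reduce (A @ reduce B)"
  by (simp add: reduce_append reduce_id reduced_reduce)

lemma reduce_cr_app: "reduce (cr e R @ B) = reduce (e # R @ B)"
proof (cases R)
  case Nil then show ?thesis by (simp add: cr_def)
next
  case (Cons f R')
  then show ?thesis
    using reduce_cancel[of "[]" e "R' @ B"] by (auto simp: cr_def inv_edge_def)
qed

lemma reduce_left: "reduce (A @ B) = reduce (reduce A @ B)"
proof (induction A)
  case Nil then show ?case by simp
next
  case (Cons e A)
  have "reduce ((e # A) @ B) = cr e (reduce (A @ B))" by (simp add: reduce_cons)
  also have "\<dots> = cr e (reduce (reduce A @ B))" using Cons by simp
  also have "\<dots> = reduce (e # reduce A @ B)" by (simp add: reduce_cons)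
  also have "\<dots> = reduce (cr e (reduce A) @ B)" by (simp add: reduce_cr_app)
  also have "\<dots> = reduce (reduce (e # A) @ B)" by (simp add: reduce_cons)
  finally show ?case .
qed

lemma reduce_mid: "reduce Y = [] \<Longrightarrow> reduce (P @ Y @ Z) = reduce (P @ Z)"
  by (metis reduce_right reduce_left append_Nil)

lemma inv_walk_cons: "inv_walk (e # A) = inv_walk A @ [inv_edge e]"
  by (simp add: inv_walk_def)

lemma inv_walk_inv[simp]: "inv_walk (inv_walk A) = A"
  by (simp add: inv_walk_def rev_map comp_def inv_edge_def)

lemma reduce_inv_l: "reduce (inv_walk A @ A) = []"
proof (induction A)
  case Nil then show ?case by (simp add: inv_walk_def)
next
  case (Cons e A)
  have "reduce (inv_walk (e # A) @ e # A) = reduce (inv_walk A @ inv_edge e # inv_edge (inv_edge e) # A)"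
    by (simp add: inv_walk_cons)
  also have "\<dots> = reduce (inv_walk A @ A)" by (rule reduce_cancel)
  finally show ?case using Cons by simp
qed

lemma reduce_inv_r: "reduce (A @ inv_walk A) = []"
  using reduce_inv_l[of "inv_walk A"] by simp

lemma reduce_inv_red: "reduce (inv_walk (reduce A) @ X) = reduce (inv_walk A @ X)"
proof -
  have "reduce (inv_walk (reduce A) @ X) = reduce (inv_walk (reduce A) @ (A @ inv_walk A) @ X)"
    using reduce_mid[OF reduce_inv_r[of A], of "inv_walk (reduce A)" X] by simp
  also have "\<dots> = reduce ((inv_walk (reduce A) @ A) @ inv_walk A @ X)" by simp
  also have "\<dots> = reduce (inv_walk A @ X)"
  proof -
    have "reduce (inv_walk (reduce A) @ A) = []"
      by (metis reduce_right reduce_inv_l)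
    then show ?thesis using reduce_mid[of "inv_walk (reduce A) @ A" "[]"] by simp
  qed
  finally show ?thesis .
qed


lemma walk_append: "walk E x y (A @ B) \<longleftrightarrow> (\<exists>m. walk E x m A \<and> walk E m y B)"
  by (induction A arbitrary: x) auto

lemma map_walk_cons: "map_walk f ((x,z) # W) = (f x, f z) # map_walk f W"
  by (simp add: map_walk_def)

lemma map_walk_append: "map_walk f (A @ B) = map_walk f A @ map_walk f B"
  by (simp add: map_walk_def)

lemma common_unique:
  fixes EH :: "'b::finite \<Rightarrow> 'b \<Rightarrow> bool"
  assumes "mono_nbhd EH" "a \<noteq> b" "EH a c" "EH b c" "EH a d" "EH b d"
  shows "c = d"
proof (rule ccontr)
  assume "c \<noteq> d"
  then have "card {c, d} = 2" by simp
  moreover have "{c,d} \<subseteq> {w. EH a w \<and> EH b w}" using assms by auto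
  ultimately have "card {w. EH a w \<and> EH b w} \<ge> 2"
    by (metis card_mono finite)
  then show False using assms(1,2) unfolding mono_nbhd_def by fastforce
qed

lemma the_common:
  fixes EH :: "'b::finite \<Rightarrow> 'b \<Rightarrow> bool"
  assumes "mono_nbhd EH" "a \<noteq> b" "EH a c" "EH b c"
  shows "(THE h. EH a h \<and> EH b h) = c"
  using assms common_unique[OF assms(1,2)] by (intro the_equality) auto

definition agree_except :: "('a \<Rightarrow> 'b) \<Rightarrow> ('a \<Rightarrow> 'b) \<Rightarrow> bool" where
  "agree_except \<sigma> \<tau> \<longleftrightarrow> (\<exists>w. \<forall>u. u \<noteq> w \<longrightarrow> \<sigma> u = \<tau> u)"

lemma one_step_edge:
  fixes EG :: "'a \<Rightarrow> 'a \<Rightarrow> bool" and EH :: "'b::finite \<Rightarrow> 'b \<Rightarrow> bool"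
  assumes symG: "sym_rel EG" and noloop: "\<forall>x. \<not> EG x x" and symH: "sym_rel EH"
    and mono: "mono_nbhd EH" and hs: "hom_col EG EH \<sigma>" and ht: "hom_col EG EH \<tau>"
    and ag: "agree_except \<sigma> \<tau>" and e: "EG x z"
  shows "reduce (step_walk EH \<sigma> \<tau> x @ (\<tau> x, \<tau> z) # T)
       = reduce ((\<sigma> x, \<sigma> z) # step_walk EH \<sigma> \<tau> z @ T)"
proof -
  obtain w where w: "\<And>u. u \<noteq> w \<Longrightarrow> \<sigma> u = \<tau> u" using ag unfolding agree_except_def by blast
  have xz: "x \<noteq> z" using noloop e by blast
  have e': "EG z x" using symG e unfolding sym_rel_def by blast
  show ?thesis
  proof (cases "\<sigma> x = \<tau> x")
    case True
    show ?thesis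
    proof (cases "\<sigma> z = \<tau> z")
      case True
      then show ?thesis using \<open>\<sigma> x = \<tau> x\<close> by (simp add: step_walk_def)
    next
      case False
      then have zw: "z = w" using w by blast
      then have "\<sigma> x = \<tau> x" using w xz by blast
      let ?a = "\<sigma> z" and ?b = "\<tau> z" and ?c = "\<sigma> x"
      have "EH ?a ?c" using hs e' unfolding hom_col_def by blast
      moreover have "EH ?b ?c" using ht e' \<open>\<sigma> x = \<tau> x\<close> unfolding hom_col_def by metis
      ultimately have h: "(THE h. EH ?a h \<and> EH ?b h) = ?c" using the_common[OF mono False] by blast
      have "reduce ((?c, ?a) # [(?a, ?c), (?c, ?b)] @ T) = reduce ((?c, ?b) # T)"
        using reduce_cancel[of "[]" "(?c, ?a)" "(?c, ?b) # T"] by (simp add: inv_edge_def)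
      then show ?thesis using False h \<open>\<sigma> x = \<tau> x\<close> by (simp add: step_walk_def Let_def)
    qed
  next
    case False
    then have xw: "x = w" using w by blast
    then have st: "\<sigma> z = \<tau> z" using w xz by metis
    let ?a = "\<sigma> x" and ?b = "\<tau> x" and ?c = "\<sigma> z"
    have "EH ?a ?c" using hs e unfolding hom_col_def by blast
    moreover have "EH ?b ?c" using ht e st unfolding hom_col_def by metis
    ultimately have h: "(THE h. EH ?a h \<and> EH ?b h) = ?c" using the_common[OF mono False] by blast
    have "reduce ([(?a, ?c)] @ (?c, ?b) # inv_edge (?c, ?b) # T) = reduce ([(?a, ?c)] @ T)"
      by (rule reduce_cancel)
    then have "reduce ([(?a, ?c), (?c, ?b)] @ (?b, ?c) # T) = reduce ((?a, ?c) # T)"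
      by (simp add: inv_edge_def)
    then show ?thesis using False h st by (simp add: step_walk_def Let_def)
  qed
qed

lemma one_step:
  fixes EG :: "'a \<Rightarrow> 'a \<Rightarrow> bool" and EH :: "'b::finite \<Rightarrow> 'b \<Rightarrow> bool"
  assumes symG: "sym_rel EG" and noloop: "\<forall>x. \<not> EG x x" and symH: "sym_rel EH"
    and mono: "mono_nbhd EH" and hs: "hom_col EG EH \<sigma>" and ht: "hom_col EG EH \<tau>"
    and ag: "agree_except \<sigma> \<tau>"
  shows "walk EG x y W \<Longrightarrow> reduce (step_walk EH \<sigma> \<tau> x @ map_walk \<tau> W)
       = reduce (map_walk \<sigma> W @ step_walk EH \<sigma> \<tau> y)"
proof (induction W arbitrary: x)
  case Nil then show ?case by (simp add: map_walk_def)
next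
  case (Cons e W)
  obtain x' z where ee: "e = (x', z)" by (cases e)
  with Cons.prems have xx: "x' = x" and ez: "EG x z" and wz: "walk EG z y W" by auto
  have IH: "reduce (step_walk EH \<sigma> \<tau> z @ map_walk \<tau> W) = reduce (map_walk \<sigma> W @ step_walk EH \<sigma> \<tau> y)"
    using Cons.IH wz by blast
  have "reduce (step_walk EH \<sigma> \<tau> x @ map_walk \<tau> (e # W))
      = reduce (step_walk EH \<sigma> \<tau> x @ (\<tau> x, \<tau> z) # map_walk \<tau> W)"
    by (simp add: ee xx map_walk_cons)
  also have "\<dots> = reduce ((\<sigma> x, \<sigma> z) # step_walk EH \<sigma> \<tau> z @ map_walk \<tau> W)"
    by (rule one_step_edge[OF assms ez])
  also have "\<dots> = cr (\<sigma> x, \<sigma> z) (reduce (step_walk EH \<sigma> \<tau> z @ map_walk \<tau> W))"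
    by (simp add: reduce_cons)
  also have "\<dots> = cr (\<sigma> x, \<sigma> z) (reduce (map_walk \<sigma> W @ step_walk EH \<sigma> \<tau> y))"
    using IH by simp
  also have "\<dots> = reduce (map_walk \<sigma> (e # W) @ step_walk EH \<sigma> \<tau> y)"
    by (simp add: reduce_cons ee xx map_walk_cons)
  finally show ?case .
qed


lemma walk_snd_sub: "walk E x y W \<Longrightarrow> snd ` set W \<subseteq> fst ` set W \<union> {y}"
proof (induction W arbitrary: x)
  case Nil then show ?case by simp
next
  case (Cons e W)
  obtain u v where e: "e = (u,v)" by (cases e)
  with Cons have wv: "walk E v y W" by auto
  have "v \<in> fst ` set W \<union> {y}" using wv by (cases W) auto
  then show ?case using Cons.IH[OF wv] e by auto
qed

lemma closed_snd_sub: "walk E x x C \<Longrightarrow> C \<noteq> [] \<Longrightarrow> snd ` set C \<subseteq> fst ` set C"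
proof -
  assume a: "walk E x x C" "C \<noteq> []"
  then have "x \<in> fst ` set C" by (cases C) auto
  then show ?thesis using walk_snd_sub[OF a(1)] by auto
qed

lemma reduced_app_bad: "reduced (A @ e # f # B) \<Longrightarrow> f \<noteq> inv_edge e"
proof (induction A)
  case Nil then show ?case by simp
next
  case (Cons a A)
  then show ?case by (cases A) (auto dest: reduced_tl)
qed

lemma decomp:
  assumes wk: "walk E x x C" and ne: "C \<noteq> []" and noloop: "\<forall>x. \<not> E x x" and wi: "w \<in> fst ` set C"
  shows "\<exists>A B u z. E u w \<and> E w z \<and> (C = A @ [(u,w),(w,z)] @ B \<or> C = (w,z) # B @ [(u,w)])"
proof -
  obtain z where "(w,z) \<in> set C" using wi by auto
  then obtain A B where C: "C = A @ (w,z) # B" by (metis split_list)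
  then obtain m where wA: "walk E x m A" and wB: "walk E m x ((w,z) # B)"
    using wk walk_append by metis
  then have mw: "m = w" and ewz: "E w z" and wB': "walk E z x B" by auto
  show ?thesis
  proof (cases A rule: rev_cases)
    case Nil
    then have xw: "x = w" using wA mw by simp
    show ?thesis
    proof (cases B rule: rev_cases)
      case Nil
      then have "z = x" using wB' by simp
      then show ?thesis using ewz xw noloop by blast
    next
      case (snoc B' e)
      obtain u y where e: "e = (u,y)" by (cases e)
      from wB' snoc e have "y = x \<and> E u y" by (auto simp: walk_append)
      then show ?thesis using C Nil snoc e xw ewz by auto
    qed
  next
    case (snoc A' e)
    obtain u y where e: "e = (u,y)" by (cases e)
    from wA snoc e mw have "y = w \<and> E u y" by (auto simp: walk_append)
    then show ?thesis using C snoc e ewz by auto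
  qed
qed

lemma freeze1:
  fixes EG :: "'a \<Rightarrow> 'a \<Rightarrow> bool" and EH :: "'b::finite \<Rightarrow> 'b \<Rightarrow> bool"
  assumes noloop: "\<forall>x. \<not> EG x x" and symH: "sym_rel EH"
    and mono: "mono_nbhd EH" and hs: "hom_col EG EH \<sigma>" and ht: "hom_col EG EH \<tau>"
    and ag: "agree_except \<sigma> \<tau>" and cl: "closed_walk EG C" and ti: "tight \<sigma> C"
    and vi: "v \<in> fst ` set C"
  shows "\<sigma> v = \<tau> v"
proof (rule ccontr)
  assume ne: "\<sigma> v \<noteq> \<tau> v"
  obtain w where w: "\<And>u. u \<noteq> w \<Longrightarrow> \<sigma> u = \<tau> u" using ag unfolding agree_except_def by blast
  then have vw: "v = w" using ne by blast
  obtain x where wk: "walk EG x x C" and cne: "C \<noteq> []" using cl unfolding closed_walk_def by blast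
  obtain A B u z where euw: "EG u v" and evz: "EG v z"
    and C: "C = A @ [(u,v),(v,z)] @ B \<or> C = (v,z) # B @ [(u,v)]"
    using decomp[OF wk cne noloop vi] by blast
  have uv: "u \<noteq> v" and zv: "z \<noteq> v" using euw evz noloop by auto
  have su: "\<sigma> u = \<tau> u" and sz: "\<sigma> z = \<tau> z" using w uv zv vw by auto
  have "EH (\<sigma> u) (\<sigma> v)" using hs euw unfolding hom_col_def by blast
  then have 1: "EH (\<sigma> v) (\<sigma> u)" using symH unfolding sym_rel_def by blast
  have "EH (\<tau> u) (\<tau> v)" using ht euw unfolding hom_col_def by blast
  then have 2: "EH (\<tau> v) (\<sigma> u)" using symH su unfolding sym_rel_def by metis
  have 3: "EH (\<sigma> v) (\<sigma> z)" using hs evz unfolding hom_col_def by blast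
  have 4: "EH (\<tau> v) (\<sigma> z)" using ht evz sz unfolding hom_col_def by metis
  have eq: "\<sigma> u = \<sigma> z" using common_unique[OF mono ne 1 2 3 4] .
  have cr: "cyclically_reduced (map_walk \<sigma> C)" using ti unfolding tight_def .
  from C show False
  proof
    assume "C = A @ [(u,v),(v,z)] @ B"
    then have "map_walk \<sigma> C = map_walk \<sigma> A @ (\<sigma> u, \<sigma> v) # (\<sigma> v, \<sigma> z) # map_walk \<sigma> B"
      by (simp add: map_walk_def)
    then show False using cr reduced_app_bad eq unfolding cyclically_reduced_def
      by (metis fst_conv inv_edge_def snd_conv)
  next
    assume "C = (v,z) # B @ [(u,v)]"
    then have "hd (map_walk \<sigma> C) = (\<sigma> v, \<sigma> z)" "last (map_walk \<sigma> C) = (\<sigma> u, \<sigma> v)"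
      by (simp_all add: map_walk_def)
    then show False using cr eq unfolding cyclically_reduced_def by (simp add: inv_edge_def)
  qed
qed

fun chain :: "('f \<Rightarrow> 'f \<Rightarrow> bool) \<Rightarrow> 'f list \<Rightarrow> bool" where
  "chain P (\<sigma> # \<tau> # ss) = (P \<sigma> \<tau> \<and> chain P (\<tau> # ss))"
| "chain P _ = True"

lemma chain_idx: "(\<forall>i. Suc i < length ss \<longrightarrow> P (ss ! i) (ss ! Suc i)) \<Longrightarrow> chain P ss"
proof (induction P ss rule: chain.induct)
  case (1 P \<sigma> \<tau> ss)
  have "P \<sigma> \<tau>" using "1.prems"[rule_format, of 0] by simp
  moreover have "\<forall>i. Suc i < length (\<tau> # ss) \<longrightarrow> P ((\<tau> # ss) ! i) ((\<tau> # ss) ! Suc i)"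
    using "1.prems" by (metis Suc_less_eq length_Cons nth_Cons_Suc)
  ultimately show ?case using "1.IH" by simp
qed auto


lemma homotopy:
  fixes EG :: "'a \<Rightarrow> 'a \<Rightarrow> bool" and EH :: "'b::finite \<Rightarrow> 'b \<Rightarrow> bool"
  assumes symG: "sym_rel EG" and noloop: "\<forall>x. \<not> EG x x" and symH: "sym_rel EH"
    and mono: "mono_nbhd EH"
  shows "chain (\<lambda>\<sigma> \<tau>. hom_col EG EH \<sigma> \<and> hom_col EG EH \<tau> \<and> agree_except \<sigma> \<tau>) ss \<Longrightarrow> ss \<noteq> []
    \<Longrightarrow> walk EG x y W \<Longrightarrow>
    reduce (vertex_walk EH ss x @ map_walk (last ss) W) = reduce (map_walk (hd ss) W @ vertex_walk EH ss y)"
proof (induction "\<lambda>\<sigma> \<tau>. hom_col EG EH \<sigma> \<and> hom_col EG EH \<tau> \<and> agree_except \<sigma> \<tau>" ss rule: chain.induct)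
  case (1 \<sigma> \<tau> ss)
  let ?s = "step_walk EH \<sigma> \<tau>" and ?V = "vertex_walk EH (\<tau> # ss)"
  have IH: "reduce (?V x @ map_walk (last (\<tau> # ss)) W) = reduce (map_walk \<tau> W @ ?V y)"
    using 1 by simp
  have os: "reduce (?s x @ map_walk \<tau> W) = reduce (map_walk \<sigma> W @ ?s y)"
    using one_step[OF symG noloop symH mono] "1.prems" by simp
  have "reduce (vertex_walk EH (\<sigma> # \<tau> # ss) x @ map_walk (last (\<sigma> # \<tau> # ss)) W)
     = reduce (?s x @ ?V x @ map_walk (last (\<tau> # ss)) W)" by simp
  also have "\<dots> = reduce (?s x @ reduce (?V x @ map_walk (last (\<tau> # ss)) W))" by (rule reduce_right)
  also have "\<dots> = reduce (?s x @ reduce (map_walk \<tau> W @ ?V y))" using IH by simp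
  also have "\<dots> = reduce ((?s x @ map_walk \<tau> W) @ ?V y)" by (metis reduce_right append_assoc)
  also have "\<dots> = reduce (reduce (?s x @ map_walk \<tau> W) @ ?V y)" by (rule reduce_left)
  also have "\<dots> = reduce (reduce (map_walk \<sigma> W @ ?s y) @ ?V y)" using os by simp
  also have "\<dots> = reduce (map_walk \<sigma> W @ ?s y @ ?V y)" by (metis reduce_left append_assoc)
  also have "\<dots> = reduce (map_walk (hd (\<sigma> # \<tau> # ss)) W @ vertex_walk EH (\<sigma> # \<tau> # ss) y)" by simp
  finally show ?case .
next
  case ("2_2" v)
  then show ?case by simp
qed simp

lemma freeze:
  fixes EG :: "'a \<Rightarrow> 'a \<Rightarrow> bool" and EH :: "'b::finite \<Rightarrow> 'b \<Rightarrow> bool"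
  assumes noloop: "\<forall>x. \<not> EG x x" and symH: "sym_rel EH"
    and mono: "mono_nbhd EH" and cl: "closed_walk EG C"
  shows "chain (\<lambda>\<sigma> \<tau>. hom_col EG EH \<sigma> \<and> hom_col EG EH \<tau> \<and> agree_except \<sigma> \<tau>) ss
    \<Longrightarrow> ss \<noteq> [] \<Longrightarrow> tight (hd ss) C \<Longrightarrow> v \<in> fst ` set C \<Longrightarrow> vertex_walk EH ss v = []"
proof (induction "\<lambda>\<sigma> \<tau>. hom_col EG EH \<sigma> \<and> hom_col EG EH \<tau> \<and> agree_except \<sigma> \<tau>" ss rule: chain.induct)
  case (1 \<sigma> \<tau> ss)
  have fr: "\<And>u. u \<in> fst ` set C \<Longrightarrow> \<sigma> u = \<tau> u"
    using freeze1[OF noloop symH mono _ _ _ cl] "1.prems" by simp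
  obtain x where wk: "walk EG x x C" and cne: "C \<noteq> []" using cl unfolding closed_walk_def by blast
  have sn: "snd ` set C \<subseteq> fst ` set C" by (rule closed_snd_sub[OF wk cne])
  have "map_walk \<tau> C = map_walk \<sigma> C"
    unfolding map_walk_def
  proof (rule map_cong[OF refl])
    fix e assume "e \<in> set C"
    moreover obtain a b where "e = (a,b)" by (cases e)
    ultimately have "a \<in> fst ` set C" "b \<in> fst ` set C" using sn by force+
    then show "(case e of (x, y) \<Rightarrow> (\<tau> x, \<tau> y)) = (case e of (x, y) \<Rightarrow> (\<sigma> x, \<sigma> y))"
      using fr \<open>e = (a,b)\<close> by simp
  qed
  then have "tight \<tau> C" using "1.prems" unfolding tight_def by simp
  then have "vertex_walk EH (\<tau> # ss) v = []" using 1 by simp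
  moreover have "step_walk EH \<sigma> \<tau> v = []" using fr "1.prems" by (simp add: step_walk_def)
  ultimately show ?case by simp
qed simp_all

theorem mainTheorem5:
  fixes EG :: "'a::finite \<Rightarrow> 'a \<Rightarrow> bool" and EH :: "'b::finite \<Rightarrow> 'b \<Rightarrow> bool"
    and \<alpha> \<beta> :: "'a \<Rightarrow> 'b" and q :: 'a and Q :: "'b owalk" and C :: "'a owalk"
  assumes "sym_rel EG" and "\<forall>x. \<not> EG x x" and "connected_graph EG" and "has_edge EG"
    and "sym_rel EH" and "connected_graph EH" and "has_edge EH" and "mono_nbhd EH"
    and "hom_col EG EH \<alpha>" and "hom_col EG EH \<beta>"
    and "realizable EG EH \<alpha> \<beta> q Q"
    and "closed_walk EG C" and "tight \<alpha> C"
  shows "\<forall>v W. v \<in> fst ` set C \<longrightarrow> walk EG v q W \<longrightarrow>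
           Q = inv_walk (reduce (map_walk \<alpha> W)) \<cdot>\<^sub>w reduce (map_walk \<beta> W)"
proof (intro allI impI)
  fix v W assume vi: "v \<in> fst ` set C" and wk: "walk EG v q W"
  obtain ss where rs: "recolor_seq EG EH ss" and hd: "hd ss = \<alpha>" and lst: "last ss = \<beta>"
    and Qd: "reduce (vertex_walk EH ss q) = Q"
    using assms(11) unfolding realizable_def by blast
  have ne: "ss \<noteq> []" using rs unfolding recolor_seq_def by blast
  have ch: "chain (\<lambda>\<sigma> \<tau>. hom_col EG EH \<sigma> \<and> hom_col EG EH \<tau> \<and> agree_except \<sigma> \<tau>) ss"
  proof (rule chain_idx, intro allI impI)
    fix i assume i: "Suc i < length ss"
    have "hom_col EG EH (ss ! i)" "hom_col EG EH (ss ! Suc i)"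
      using rs i unfolding recolor_seq_def by auto
    moreover have "card {v. (ss ! i) v \<noteq> (ss ! Suc i) v} = 1"
      using rs i unfolding recolor_seq_def by blast
    then obtain w where "{v. (ss ! i) v \<noteq> (ss ! Suc i) v} = {w}" by (meson card_1_singletonE)
    then have "agree_except (ss ! i) (ss ! Suc i)" unfolding agree_except_def by blast
    ultimately show "hom_col EG EH (ss ! i) \<and> hom_col EG EH (ss ! Suc i) \<and> agree_except (ss ! i) (ss ! Suc i)"
      by blast
  qed
  have vv: "vertex_walk EH ss v = []"
    using freeze[OF assms(2,5,8,12) ch ne] hd assms(13) vi by simp
  have hom: "reduce (map_walk \<beta> W) = reduce (map_walk \<alpha> W @ vertex_walk EH ss q)"
    using homotopy[OF assms(1,2,5,8) ch ne wk] vv hd lst by simp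
  let ?A = "map_walk \<alpha> W" and ?B = "map_walk \<beta> W" and ?S = "vertex_walk EH ss q"
  have "inv_walk (reduce ?A) \<cdot>\<^sub>w reduce ?B = reduce (inv_walk (reduce ?A) @ reduce ?B)"
    by (simp add: wmult_def)
  also have "\<dots> = reduce (inv_walk ?A @ reduce ?B)" by (rule reduce_inv_red)
  also have "\<dots> = reduce (inv_walk ?A @ reduce (?A @ ?S))" using hom by simp
  also have "\<dots> = reduce (inv_walk ?A @ ?A @ ?S)" by (metis reduce_right)
  also have "\<dots> = reduce ?S" using reduce_mid[OF reduce_inv_l[of ?A], of "[]" ?S] by simp
  finally show "Q = inv_walk (reduce ?A) \<cdot>\<^sub>w reduce ?B" using Qd by simp
qed

end
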